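(* Let $l_1,u_1,l_2,u_2$ be non-negative integers and $(f(k))$, $(g(k))$ complex sequences such that the polynomial identity \[ \sum_{k=l_1}^{u_1}f(k)(1-t)^k=\sum_{k=l_2}^{u_2}g(k)t^k \] holds for all complex $t$. Let $r,s\in\mathbb{C}\setminus\mathbb{Z}^{-}$ with $s\neq0$ and $r-s\notin\mathbb{Z}^{-}$. Then \[ \sum_{k=l_1}^{u_1}f(k)\frac{1}{\binom{k+r}{s}}=\sum_{k=l_2}^{u_2}g(k)\frac{s}{r-s+1}\frac{1}{\binom{k+r}{r-s+1}}, \] and \[ \sum_{k=l_1}^{u_1}f(k)\frac{H_s-H_{k+r-s}}{\binom{k+r}{s}}=\sum_{k=l_2}^{u_2}g(k)\frac{r+1}{(r-s+1)^2}\frac{1}{\binom{k+r}{r-s+1}}+\sum_{k=l_2}^{u_2}g(k)\frac{s}{r-s+1}\frac{H_{k+s-1}-H_{r-s+1}}{\binom{k+r}{r-s+1}}. \]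
   Context: $\mathbb{Z}^{-}$ denotes the set of negative integers. For complex $z$ not a negative integer, $H_z=\psi(z+1)+\gamma$ ($\psi$ the digamma function, $\gamma$ Euler's constant). Binomial coefficients with complex entries: $\binom{x}{y}=\frac{\Gamma(x+1)}{\Gamma(y+1)\Gamma(x-y+1)}$. *)

theory Defs
  imports "HOL-Analysis.Analysis"
begin

definition neg_ints :: "complex set" where
  "neg_ints = {of_int n | n. n < 0}"

definition harm :: "complex \<Rightarrow> complex" where
  "harm z = Digamma (z + 1) + euler_mascheroni"

definition cbinom :: "complex \<Rightarrow> complex \<Rightarrow> complex" where
  "cbinom x y = Gamma (x + 1) / (Gamma (y + 1) * Gamma (x - y + 1))"

end

theory Submission
  imports Defs
begin

lemma ext_choose:
  fixes c :: "nat \<Rightarrow> complex"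
  assumes "j \<le> N"
  shows "(\<Sum>i\<le>N. of_nat (j choose i) * c i) = (\<Sum>i\<le>j. of_nat (j choose i) * c i)"
  by (rule sum.mono_neutral_right) (use assms in auto)

lemma restrict_sum:
  fixes X :: "nat \<Rightarrow> complex"
  assumes "u \<le> N"
  shows "(\<Sum>k=l..u. X k) = (\<Sum>k\<le>N. if k \<in> {l..u} then X k else 0)"
proof -
  have "{..N} \<inter> {l..u} = {l..u}" using assms by auto
  have "(\<Sum>k\<le>N. if k \<in> {l..u} then X k else 0) = sum X ({..N} \<inter> {l..u})"
    by (rule sum.inter_restrict[symmetric]) simp
  then show ?thesis using assms by (simp add: min_absorb2)
qed

lemma poly_reduce:
  fixes f g a :: "nat \<Rightarrow> complex"
  assumes poly: "\<forall>t::complex. (\<Sum>k=l1..u1. f k * (1 - t) ^ k) = (\<Sum>k=l2..u2. g k * t ^ k)"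
  shows "(\<Sum>k=l1..u1. f k * a k) =
     (\<Sum>k=l2..u2. g k * (\<Sum>i\<le>k. of_nat (k choose i) * (-1)^i * a i))"
proof -
  define N where "N = max u1 u2"
  define F where "F i = (if i \<in> {l1..u1} then f i else 0)" for i
  define G where "G i = (if i \<in> {l2..u2} then g i else 0)" for i
  define H where "H i = (\<Sum>j\<le>N. G j * (of_nat (j choose i) * (-1)^i))" for i
  have u1: "u1 \<le> N" and u2: "u2 \<le> N" unfolding N_def by auto
  have eqF: "(\<Sum>k=l1..u1. f k * X k) = (\<Sum>k\<le>N. F k * X k)" for X
    by (subst restrict_sum[OF u1]) (rule sum.cong, auto simp: F_def)
  have eqG: "(\<Sum>k=l2..u2. g k * X k) = (\<Sum>k\<le>N. G k * X k)" for X
    by (subst restrict_sum[OF u2]) (rule sum.cong, auto simp: G_def)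
  have PE: "(\<Sum>k\<le>N. F k * x^k) = (\<Sum>i\<le>N. H i * x^i)" for x :: complex
  proof -
    have "(\<Sum>k\<le>N. F k * x^k) = (\<Sum>k=l1..u1. f k * (1 - (1 - x))^k)"
      using eqF[of "\<lambda>k. x^k"] by simp
    also have "\<dots> = (\<Sum>j\<le>N. G j * (1 - x)^j)"
      using poly[rule_format, of "1 - x"] eqG[of "\<lambda>k. (1 - x)^k"] by (simp only: diff_diff_eq2 diff_self add_0)
    also have "\<dots> = (\<Sum>j\<le>N. G j * (\<Sum>i\<le>N. of_nat (j choose i) * ((-1)^i * x^i)))"
    proof (rule sum.cong[OF refl])
      fix j assume "j \<in> {..N}"
      then have jN: "j \<le> N" by simp
      have "(1 - x)^j = (-x + 1)^j" by simp
      also have "\<dots> = (\<Sum>i\<le>j. of_nat (j choose i) * (-x)^i * 1^(j-i))"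
        by (rule binomial_ring)
      also have "\<dots> = (\<Sum>i\<le>j. of_nat (j choose i) * ((-1)^i * x^i))"
        by (simp add: power_minus[of x])
      also have "\<dots> = (\<Sum>i\<le>N. of_nat (j choose i) * ((-1)^i * x^i))"
        using ext_choose[OF jN] by simp
      finally show "G j * (1 - x)^j = G j * (\<Sum>i\<le>N. of_nat (j choose i) * ((-1)^i * x^i))"
        by simp
    qed
    also have "\<dots> = (\<Sum>i\<le>N. H i * x^i)"
      unfolding H_def sum_distrib_left sum_distrib_right
      by (subst sum.swap) (simp add: mult_ac)
    finally show ?thesis .
  qed
  have FH: "\<forall>i\<le>N. F i = H i" using polyfun_eq_coeffs[of F N H] PE by blast
  have "(\<Sum>k=l1..u1. f k * a k) = (\<Sum>k\<le>N. F k * a k)" by (rule eqF)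
  also have "\<dots> = (\<Sum>k\<le>N. H k * a k)" using FH by simp
  also have "\<dots> = (\<Sum>j\<le>N. G j * (\<Sum>i\<le>N. of_nat (j choose i) * ((-1)^i * a i)))"
    unfolding H_def sum_distrib_left sum_distrib_right
    by (subst sum.swap) (simp add: mult_ac)
  also have "\<dots> = (\<Sum>j\<le>N. G j * (\<Sum>i\<le>j. of_nat (j choose i) * ((-1)^i * a i)))"
    by (rule sum.cong[OF refl]) (subst ext_choose[where N=N], auto)
  also have "\<dots> = (\<Sum>k=l2..u2. g k * (\<Sum>i\<le>k. of_nat (k choose i) * (-1)^i * a i))"
    using eqG[of "\<lambda>j. (\<Sum>i\<le>j. of_nat (j choose i) * ((-1)^i * a i))"] by (simp add: mult_ac)
  finally show ?thesis .
qed

lemma diff_rec: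
  fixes \<phi> :: "complex \<Rightarrow> complex" and B :: "nat \<Rightarrow> complex \<Rightarrow> complex"
  assumes P1: "\<And>r. P r \<Longrightarrow> P (r + 1)"
    and B0: "\<And>r. P r \<Longrightarrow> B 0 r = \<phi> r"
    and BS: "\<And>j r. P r \<Longrightarrow> B (Suc j) r = B j r - B j (r + 1)"
  shows "P r \<Longrightarrow> (\<Sum>i\<le>j. of_nat (j choose i) * (-1)^i * \<phi> (of_nat i + r)) = B j r"
proof (induction j arbitrary: r)
  case 0
  then show ?case using B0 by simp
next
  case (Suc j)
  define c where "c i = (-1)^i * \<phi> (of_nat i + r)" for i
  have cS: "c (Suc i) = - ((-1)^i * \<phi> (of_nat i + (r + 1)))" for i
    unfolding c_def by (simp add: add_ac)
  have "(\<Sum>i\<le>Suc j. of_nat (Suc j choose i) * c i)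
      = c 0 + (\<Sum>i\<le>j. of_nat (Suc j choose Suc i) * c (Suc i))"
    by (subst sum.atMost_Suc_shift) simp
  also have "\<dots> = c 0 + (\<Sum>i\<le>j. of_nat (j choose i) * c (Suc i))
                 + (\<Sum>i\<le>j. of_nat (j choose Suc i) * c (Suc i))"
    by (simp add: sum.distrib algebra_simps)
  also have "(\<Sum>i\<le>j. of_nat (j choose Suc i) * c (Suc i)) = (\<Sum>i\<le>Suc j. of_nat (j choose i) * c i) - c 0"
    by (subst sum.atMost_Suc_shift) simp
  also have "(\<Sum>i\<le>Suc j. of_nat (j choose i) * c i) = (\<Sum>i\<le>j. of_nat (j choose i) * c i)"
    by simp
  finally have "(\<Sum>i\<le>Suc j. of_nat (Suc j choose i) * c i)
     = (\<Sum>i\<le>j. of_nat (j choose i) * c i) + (\<Sum>i\<le>j. of_nat (j choose i) * c (Suc i))"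
    by simp
  also have "(\<Sum>i\<le>j. of_nat (j choose i) * c i) = B j r"
    using Suc.IH[OF Suc.prems] by (simp add: c_def mult_ac)
  also have "(\<Sum>i\<le>j. of_nat (j choose i) * c (Suc i)) = - B j (r + 1)"
    using Suc.IH[OF P1[OF Suc.prems]] by (simp add: cS sum_negf mult_ac)
  finally show ?case using BS[OF Suc.prems] by (simp add: c_def mult_ac)
qed


lemma notnp:
  fixes z :: complex
  assumes "z \<notin> neg_ints" "z \<noteq> 0"
  shows "of_nat j + z \<notin> \<int>\<^sub>\<le>\<^sub>0"
proof
  assume "of_nat j + z \<in> \<int>\<^sub>\<le>\<^sub>0"
  then obtain n where n: "of_nat j + z = of_int n" "n \<le> 0" by (auto elim!: nonpos_Ints_cases)
  then have z: "z = of_int (n - int j)" by (simp add: algebra_simps)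
  show False
  proof (cases "n - int j < 0")
    case True then show False using assms(1) z unfolding neg_ints_def by blast
  next
    case False then have "n - int j = 0" using n(2) by linarith
    then show False using z assms(2) by simp
  qed
qed

lemma np1:
  fixes z :: complex
  assumes "z \<notin> neg_ints"
  shows "z + 1 \<notin> neg_ints" "z + 1 \<noteq> 0"
proof
  assume "z + 1 \<in> neg_ints"
  then obtain n where "z + 1 = of_int n" "n < 0" unfolding neg_ints_def by blast
  then have "z = of_int (n - 1)" "n - 1 < 0" by (simp_all add: algebra_simps)
  then show False using assms unfolding neg_ints_def by blast
next
  show "z + 1 \<noteq> 0"
  proof
    assume "z + 1 = 0"
    then have "z = of_int (-1)" by (simp add: eq_neg_iff_add_eq_0)
    then have "z \<in> neg_ints" unfolding neg_ints_def by (auto intro!: exI[of _ "-1::int"])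
    then show False using assms by blast
  qed
qed

definition B1 :: "complex \<Rightarrow> nat \<Rightarrow> complex \<Rightarrow> complex" where
  "B1 s j r = s * Gamma (r - s + 1) * Gamma (of_nat j + s) / Gamma (of_nat j + r + 1)"

definition DD :: "complex \<Rightarrow> nat \<Rightarrow> complex \<Rightarrow> complex" where
  "DD s j r = 1 / s + Digamma (of_nat j + s) - Digamma (r - s + 1)"


lemma alg_c2: "(a::complex) \<noteq> 0 \<Longrightarrow> s / a * (1 / (D / ((a * R) * S))) = s * R * S / D"
  by (cases "D = 0") (simp_all add: field_simps)

lemma alg_phi: "1 / ((D::complex) / ((s * S) * R)) = s * R * S / D"
  by (cases "D = 0") (simp_all add: field_simps)

lemma alg_rec: "(x::complex) \<noteq> 0 \<Longrightarrow> Gd \<noteq> 0 \<Longrightarrow> x = a + b \<Longrightarrow>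
   s * R * (b * S) / (x * Gd) = s * R * S / Gd - s * (a * R) * S / (x * Gd)"
proof -
  assume x: "x \<noteq> 0" and G: "Gd \<noteq> 0" and e: "x = a + b"
  have "s * R * S / Gd = s * R * S * x / (x * Gd)" using x by simp
  then have "s * R * S / Gd - s * (a * R) * S / (x * Gd) = (s * R * S * x - s * (a * R) * S) / (x * Gd)"
    by (simp add: diff_divide_distrib)
  also have "s * R * S * x - s * (a * R) * S = s * R * (b * S)" unfolding e by (simp add: algebra_simps)
  finally show ?thesis by simp
qed

lemma alg_c3: "(a::complex) \<noteq> 0 \<Longrightarrow> s \<noteq> 0 \<Longrightarrow> r1 = a + s \<Longrightarrow>
   r1 / a^2 * C + s / a * ((P - Q - 1 / a) * C) = s / a * C * (1 / s + P - Q)"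
  by (simp add: field_simps power2_eq_square)

lemma alg_key: "(a::complex) \<noteq> 0 \<Longrightarrow> b \<noteq> 0 \<Longrightarrow>
   s * (a * R) * S / (x * Gd) / a = s * R * (b * S) / (x * Gd) / b"
  by (simp add: field_simps)

lemma alg_bd: "(X::complex) / a = Y / b \<Longrightarrow> Y * (D + 1 / b) = (Y + X) * D - X * (D - 1 / a)"
  by (simp add: algebra_simps)

locale setup_rs =
  fixes r s :: complex
  assumes r: "r \<notin> neg_ints" and s: "s \<notin> neg_ints" and s0: "s \<noteq> 0"
    and rs: "r - s \<notin> neg_ints"
begin

lemma facts:
  shows "of_nat j + s \<notin> \<int>\<^sub>\<le>\<^sub>0" "of_nat j + s \<noteq> 0"
    "of_nat j + r + 1 \<notin> \<int>\<^sub>\<le>\<^sub>0" "of_nat j + r + 1 \<noteq> 0"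
    "r - s + 1 \<notin> \<int>\<^sub>\<le>\<^sub>0" "r - s + 1 \<noteq> 0"
    "s \<notin> \<int>\<^sub>\<le>\<^sub>0"
    "Gamma (of_nat j + r + 1) \<noteq> 0"
proof -
  show a: "of_nat j + s \<notin> \<int>\<^sub>\<le>\<^sub>0" using notnp[OF s s0] .
  then show "of_nat j + s \<noteq> 0" by auto
  have "of_nat j + (r + 1) \<notin> \<int>\<^sub>\<le>\<^sub>0" using notnp[OF np1[OF r]] .
  then show b: "of_nat j + r + 1 \<notin> \<int>\<^sub>\<le>\<^sub>0" by (simp add: add_ac)
  then show "of_nat j + r + 1 \<noteq> 0" by auto
  show "Gamma (of_nat j + r + 1) \<noteq> 0" using b by (rule Gamma_nonzero)
  have "of_nat 0 + (r - s + 1) \<notin> \<int>\<^sub>\<le>\<^sub>0" using notnp[OF np1[OF rs]] .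
  then show "r - s + 1 \<notin> \<int>\<^sub>\<le>\<^sub>0" by simp
  then show "r - s + 1 \<noteq> 0" by auto
  show "s \<notin> \<int>\<^sub>\<le>\<^sub>0" using notnp[OF s s0, of 0] by simp
qed



lemma phi1_B0: "1 / cbinom r s = B1 s 0 r"
proof -
  have "Gamma (s + 1) = s * Gamma s" using facts(7) by (rule Gamma_plus1)
  then show ?thesis unfolding cbinom_def B1_def using alg_phi by simp
qed

lemma c2: "s / (r - s + 1) * (1 / cbinom (of_nat j + r) (r - s + 1)) = B1 s j r"
proof -
  have e: "of_nat j + r - (r - s + 1) + 1 = of_nat j + s" by simp
  have g: "Gamma (r - s + 1 + 1) = (r - s + 1) * Gamma (r - s + 1)"
    using facts(5) by (rule Gamma_plus1)
  show ?thesis unfolding cbinom_def B1_def e g by (rule alg_c2[OF facts(6)])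
qed

lemma B1_Suc: "B1 s (Suc j) r = s * Gamma (r - s + 1) * ((of_nat j + s) * Gamma (of_nat j + s)) /
     ((of_nat j + r + 1) * Gamma (of_nat j + r + 1))"
proof -
  have g1: "Gamma (of_nat (Suc j) + s) = (of_nat j + s) * Gamma (of_nat j + s)"
    using Gamma_plus1[OF facts(1)[of j]] by (simp add: add_ac)
  have g3: "Gamma (of_nat (Suc j) + r + 1) = (of_nat j + r + 1) * Gamma (of_nat j + r + 1)"
    using Gamma_plus1[OF facts(3)[of j]] by (simp add: add_ac)
  show ?thesis unfolding B1_def g1 g3 by (simp only: of_nat_Suc add_ac)
qed

lemma B1_r1: "B1 s j (r + 1) = s * ((r - s + 1) * Gamma (r - s + 1)) * Gamma (of_nat j + s) /
     ((of_nat j + r + 1) * Gamma (of_nat j + r + 1))"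
proof -
  have g2: "Gamma (r + 1 - s + 1) = (r - s + 1) * Gamma (r - s + 1)"
    using Gamma_plus1[OF facts(5)] by (simp add: algebra_simps)
  have g3: "Gamma (of_nat j + (r + 1) + 1) = (of_nat j + r + 1) * Gamma (of_nat j + r + 1)"
    using Gamma_plus1[OF facts(3)[of j]] by (simp add: add_ac)
  show ?thesis unfolding B1_def g2 g3 by (simp add: add_ac)
qed

lemma B1_rec: "B1 s (Suc j) r = B1 s j r - B1 s j (r + 1)"
  unfolding B1_Suc B1_r1 B1_def[of s j r] by (rule alg_rec[OF facts(4) facts(8)]) simp

lemma key: "B1 s j (r + 1) / (r - s + 1) = B1 s (Suc j) r / (of_nat j + s)"
  unfolding B1_Suc B1_r1 by (rule alg_key[OF facts(6) facts(2)])

lemma DD_Suc: "DD s (Suc j) r = DD s j r + 1 / (of_nat j + s)"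
proof -
  have "Digamma (of_nat (Suc j) + s) = Digamma (of_nat j + s) + 1 / (of_nat j + s)"
    using Digamma_plus1[OF facts(2)[of j]] by (simp add: add_ac)
  then show ?thesis unfolding DD_def by simp
qed

lemma DD_r1: "DD s j (r + 1) = DD s j r - 1 / (r - s + 1)"
proof -
  have "Digamma (r + 1 - s + 1) = Digamma (r - s + 1) + 1 / (r - s + 1)"
    using Digamma_plus1[OF facts(6)] by (simp add: algebra_simps)
  then show ?thesis unfolding DD_def by simp
qed

lemma phi2_B0: "(harm s - harm (r - s)) / cbinom r s = B1 s 0 r * DD s 0 r"
proof -
  have "Digamma (s + 1) = Digamma s + 1 / s" using s0 by (rule Digamma_plus1)
  then show ?thesis unfolding phi1_B0[symmetric] harm_def DD_def
    by (simp add: field_simps add_ac)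
qed

lemma c3: "(r + 1) / (r - s + 1)^2 * (1 / cbinom (of_nat j + r) (r - s + 1)) +
   s / (r - s + 1) * ((harm (of_nat j + s - 1) - harm (r - s + 1)) / cbinom (of_nat j + r) (r - s + 1))
   = B1 s j r * DD s j r"
proof -
  define C where "C = 1 / cbinom (of_nat j + r) (r - s + 1)"
  have B: "B1 s j r = s / (r - s + 1) * C" using c2 unfolding C_def by simp
  have d: "Digamma (r - s + 1 + 1) = Digamma (r - s + 1) + 1 / (r - s + 1)"
    using Digamma_plus1[OF facts(6)] .
  have h: "(harm (of_nat j + s - 1) - harm (r - s + 1)) / cbinom (of_nat j + r) (r - s + 1)
      = (Digamma (of_nat j + s) - Digamma (r - s + 1) - 1 / (r - s + 1)) * C"
    unfolding harm_def C_def d by simp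
  show ?thesis unfolding B DD_def h C_def[symmetric]
    by (rule alg_c3[OF facts(6) s0]) simp
qed

lemma BD_rec: "B1 s (Suc j) r * DD s (Suc j) r = B1 s j r * DD s j r - B1 s j (r + 1) * DD s j (r + 1)"
proof -
  have e: "B1 s j r = B1 s (Suc j) r + B1 s j (r + 1)" using B1_rec by simp
  show ?thesis unfolding DD_Suc DD_r1 e by (rule alg_bd[OF key])
qed

end


theorem lemma5:
  fixes l1 u1 l2 u2 :: nat and f g :: "nat \<Rightarrow> complex" and r s :: complex
  assumes poly: "\<forall>t::complex. (\<Sum>k=l1..u1. f k * (1 - t) ^ k) = (\<Sum>k=l2..u2. g k * t ^ k)"
    and r: "r \<notin> neg_ints" and s: "s \<notin> neg_ints" and s0: "s \<noteq> 0"
    and rs: "r - s \<notin> neg_ints"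
  shows "((\<Sum>k=l1..u1. f k * (1 / cbinom (of_nat k + r) s))
           = (\<Sum>k=l2..u2. g k * (s / (r - s + 1)) * (1 / cbinom (of_nat k + r) (r - s + 1)))) \<and>
         ((\<Sum>k=l1..u1. f k * ((harm s - harm (of_nat k + r - s)) / cbinom (of_nat k + r) s))
           = (\<Sum>k=l2..u2. g k * ((r + 1) / (r - s + 1)^2) * (1 / cbinom (of_nat k + r) (r - s + 1)))
             + (\<Sum>k=l2..u2. g k * (s / (r - s + 1)) *
                  ((harm (of_nat k + s - 1) - harm (r - s + 1)) / cbinom (of_nat k + r) (r - s + 1))))"
proof -
  define P where "P r' = (r' \<notin> neg_ints \<and> r' - s \<notin> neg_ints)" for r'
  have L: "setup_rs r' s" if "P r'" for r'
    using that s s0 unfolding P_def by unfold_locales auto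
  have P1: "P (r' + 1)" if "P r'" for r'
  proof -
    have "r' + 1 - s = (r' - s) + 1" by simp
    then show ?thesis using that np1(1) unfolding P_def by metis
  qed
  have Pr: "P r" using r rs unfolding P_def by simp
  interpret setup_rs r s using L[OF Pr] .
  have S1: "(\<Sum>i\<le>j. of_nat (j choose i) * (-1)^i * (1 / cbinom (of_nat i + r) s)) = B1 s j r" for j
    by (rule diff_rec[where P = P and B = "B1 s" and \<phi> = "\<lambda>x. 1 / cbinom x s", OF P1 _ _ Pr])
       (use L setup_rs.phi1_B0 setup_rs.B1_rec in auto)
  have S2: "(\<Sum>i\<le>j. of_nat (j choose i) * (-1)^i * ((harm s - harm (of_nat i + r - s)) / cbinom (of_nat i + r) s))
      = B1 s j r * DD s j r" for j
    by (rule diff_rec[where P = P and B = "\<lambda>j r. B1 s j r * DD s j r"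
          and \<phi> = "\<lambda>x. (harm s - harm (x - s)) / cbinom x s", OF P1 _ _ Pr])
       (use L setup_rs.phi2_B0 setup_rs.BD_rec in auto)
  have first: "(\<Sum>k=l1..u1. f k * (1 / cbinom (of_nat k + r) s))
           = (\<Sum>k=l2..u2. g k * (s / (r - s + 1)) * (1 / cbinom (of_nat k + r) (r - s + 1)))"
    unfolding poly_reduce[OF poly] S1
    by (rule sum.cong[OF refl]) (simp only: c2[symmetric] mult.assoc)
  have "(\<Sum>k=l1..u1. f k * ((harm s - harm (of_nat k + r - s)) / cbinom (of_nat k + r) s))
      = (\<Sum>k=l2..u2. g k * (B1 s k r * DD s k r))"
    unfolding poly_reduce[OF poly] S2 ..
  also have "\<dots> = (\<Sum>k=l2..u2. g k * ((r + 1) / (r - s + 1)^2) * (1 / cbinom (of_nat k + r) (r - s + 1))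
         + g k * (s / (r - s + 1)) *
                  ((harm (of_nat k + s - 1) - harm (r - s + 1)) / cbinom (of_nat k + r) (r - s + 1)))"
    by (rule sum.cong[OF refl]) (simp only: c3[symmetric] distrib_left mult.assoc)
  finally show ?thesis using first by (simp add: sum.distrib)
qed

end
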